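(* Let $\mathbf{X}=[\mathbf{x}_1,\dots,\mathbf{x}_T]\in\mathbb{R}^{N\times T}$ be a dataset and $\boldsymbol{\Pi}\in\mathbb{R}^{N\times N}$ a permutation matrix, and set $\bar{\mathbf{X}}=\boldsymbol{\Pi}\mathbf{X}$. Let $\Phi$ denote the covariance scattering transform (CST) built from $\mathbf{X}$ and $\bar\Phi$ the CST built from $\bar{\mathbf{X}}$, both with the same wavelet functions $h_0,\dots,h_{J-1}$, the same number of layers $L$, the same nonlinearity $\rho$, the same choice of operator type and the same map $U$ (see context). Then for every signal $\mathbf{x}\in\mathbb{R}^N$: (i) if $U:\mathbb{R}^N\to\mathbb{R}^N$ is permutation equivariant, i.e. $U(\boldsymbol{\Pi}\mathbf{y})=\boldsymbol{\Pi}U(\mathbf{y})$ for all $\mathbf{y}$ and all permutation matrices $\boldsymbol{\Pi}$ (e.g. the identity), then $\bar\Phi(\boldsymbol{\Pi}\mathbf{x})=\operatorname{Perm}(\Phi(\mathbf{x}),\boldsymbol{\Pi})$; (ii) if $U$ is permutation invariant, i.e. $U(\boldsymbol{\Pi}\mathbf{y})=U(\mathbf{y})$ for all $\mathbf{y}$ and all permutation matrices (e.g. the average $U(\mathbf{y})=\frac1N\mathbf{1}^\top\mathbf{y}$), then $\bar\Phi(\boldsymbol{\Pi}\mathbf{x})=\Phi(\mathbf{x})$.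
   Context: For a dataset $\mathbf{X}=[\mathbf{x}_1,\dots,\mathbf{x}_T]$, the sample mean is $\hat{\boldsymbol\mu}=\frac1T\sum_t\mathbf{x}_t$ and the sample covariance is $\hat{\mathbf{C}}=\frac1T\sum_{t=1}^T(\mathbf{x}_t-\hat{\boldsymbol\mu})(\mathbf{x}_t-\hat{\boldsymbol\mu})^\top$, with largest eigenvalue $\hat w_1>0$. Fix $\gamma>0$. The covariance wavelet operator is either $\hat{\mathbf{T}}=\gamma\hat{\mathbf{C}}/\hat w_1$ or $\hat{\mathbf{T}}=\gamma(\mathbf{I}-\hat{\mathbf{C}}/\hat w_1)$ (the same choice is made for both datasets). For a symmetric matrix $\mathbf{T}=\mathbf{V}\boldsymbol\Lambda\mathbf{V}^\top$ with eigenvalues $\lambda_1,\dots,\lambda_N$ and a fixed function $h:\mathbb{R}\to\mathbb{R}$, the covariance wavelet is $\mathbf{H}(\mathbf{T})=\mathbf{V}\operatorname{diag}(h(\lambda_1),\dots,h(\lambda_N))\mathbf{V}^\top$. Given fixed wavelet functions $h_0,\dots,h_{J-1}$ (not depending on the data), write $\mathbf{H}_j=\mathbf{H}_j(\hat{\mathbf{T}})$. With $\rho:\mathbb{R}\to\mathbb{R}$ applied entrywise, the scattering features of a signal $\mathbf{x}$ are defined recursively by $\mathbf{x}_{()}=\mathbf{x}$ and $\mathbf{x}_{(j_\ell,\dots,j_1)}=\rho(\mathbf{H}_{j_\ell}\mathbf{x}_{(j_{\ell-1},\dots,j_1)})$ for $j_i\in\{0,\dots,J-1\}$, i.e. $\mathbf{x}_{(j_\ell,\dots,j_1)}=\rho(\mathbf{H}_{j_\ell}\rho(\mathbf{H}_{j_{\ell-1}}\cdots\rho(\mathbf{H}_{j_1}\mathbf{x})))$.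 The CST $\Phi(\mathbf{x})$ is the concatenation (in a fixed order of index tuples) of $U\mathbf{x}_{(j_\ell,\dots,j_1)}$ over all layers $\ell=0,\dots,L-1$ and all tuples $(j_\ell,\dots,j_1)\in\{0,\dots,J-1\}^\ell$. When $U$ maps $\mathbb{R}^N$ to $\mathbb{R}^N$, the CST permutation operator is $\operatorname{Perm}(\Phi(\mathbf{x}),\boldsymbol\Pi)=[\boldsymbol\Pi U\mathbf{x}\,\|\,\boldsymbol\Pi U\mathbf{x}_{(0)}\,\|\cdots]$, i.e. each concatenated block $U\mathbf{x}_{(j_\ell,\dots,j_1)}$ is replaced by $\boldsymbol\Pi U\mathbf{x}_{(j_\ell,\dots,j_1)}$. *)

theory Defs
  imports "HOL-Analysis.Analysis"
begin

definition perm_matrix :: "('n::finite \<Rightarrow> 'n) \<Rightarrow> real^'n^'n" where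
  "perm_matrix p = (\<chi> i j. if i = p j then 1 else 0)"

definition is_permutation_matrix :: "real^'n::finite^'n \<Rightarrow> bool" where
  "is_permutation_matrix P \<longleftrightarrow> (\<exists>p. p permutes (UNIV :: 'n set) \<and> P = perm_matrix p)"

definition sample_mean :: "real^'t::finite^'n::finite \<Rightarrow> real^'n" where
  "sample_mean X = (1 / real CARD('t)) *\<^sub>R (\<Sum>t\<in>UNIV. column t X)"

definition outer :: "real^'n::finite \<Rightarrow> real^'n \<Rightarrow> real^'n^'n" where
  "outer u v = (\<chi> i j. u $ i * v $ j)"

definition sample_cov :: "real^'t::finite^'n::finite \<Rightarrow> real^'n^'n" where
  "sample_cov X = (1 / real CARD('t)) *\<^sub>R
     (\<Sum>t\<in>UNIV. outer (column t X - sample_mean X) (column t X - sample_mean X))"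

definition eigenvalues :: "real^'n::finite^'n \<Rightarrow> real set" where
  "eigenvalues A = {c. \<exists>v. v \<noteq> 0 \<and> A *v v = c *\<^sub>R v}"

definition largest_eigenvalue :: "real^'n::finite^'n \<Rightarrow> real" where
  "largest_eigenvalue A = Max (eigenvalues A)"

definition cov_operator :: "bool \<Rightarrow> real \<Rightarrow> real^'t::finite^'n::finite \<Rightarrow> real^'n^'n" where
  "cov_operator b \<gamma> X =
     (let C = sample_cov X; w = largest_eigenvalue C in
      if b then (\<gamma> / w) *\<^sub>R C else \<gamma> *\<^sub>R (mat 1 - (1 / w) *\<^sub>R C))"

definition diag_mat :: "('n::finite \<Rightarrow> real) \<Rightarrow> real^'n^'n" where
  "diag_mat d = (\<chi> i j. if i = j then d i else 0)"

text \<open>H(T) = V diag(h(lambda_1),...,h(lambda_N)) V^T for an eigendecomposition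
  T = V diag(lambda) V^T with V orthogonal (independent of the choice of decomposition).\<close>
definition spectral_fun :: "(real \<Rightarrow> real) \<Rightarrow> real^'n::finite^'n \<Rightarrow> real^'n^'n" where
  "spectral_fun h A = (SOME M. \<exists>V lam. orthogonal_matrix V \<and>
       A = V ** diag_mat lam ** transpose V \<and> M = V ** diag_mat (h \<circ> lam) ** transpose V)"

definition entrywise :: "(real \<Rightarrow> real) \<Rightarrow> real^'n::finite \<Rightarrow> real^'n" where
  "entrywise \<rho> v = (\<chi> i. \<rho> (v $ i))"

text \<open>Scattering feature x_(j_l,...,j_1); the tuple is the list [j_l, ..., j_1].\<close>
fun scat_feature :: "(nat \<Rightarrow> real^'n::finite^'n) \<Rightarrow> (real \<Rightarrow> real) \<Rightarrow> nat list \<Rightarrow> real^'n \<Rightarrow> real^'n" where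
  "scat_feature H \<rho> [] x = x"
| "scat_feature H \<rho> (j # js) x = entrywise \<rho> (H j *v scat_feature H \<rho> js x)"

fun tuples_len :: "nat \<Rightarrow> nat \<Rightarrow> nat list list" where
  "tuples_len J 0 = [[]]"
| "tuples_len J (Suc l) = concat (map (\<lambda>j. map (\<lambda>js. j # js) (tuples_len J l)) [0..<J])"

definition all_tuples :: "nat \<Rightarrow> nat \<Rightarrow> nat list list" where
  "all_tuples J L = concat (map (tuples_len J) [0..<L])"

definition CST :: "bool \<Rightarrow> real \<Rightarrow> real^'t::finite^'n::finite \<Rightarrow> (nat \<Rightarrow> real \<Rightarrow> real) \<Rightarrow> nat \<Rightarrow> nat
      \<Rightarrow> (real \<Rightarrow> real) \<Rightarrow> (real^'n \<Rightarrow> 'm) \<Rightarrow> real^'n \<Rightarrow> 'm list" where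
  "CST b \<gamma> X h J L \<rho> U x =
     (let H = (\<lambda>j. spectral_fun (h j) (cov_operator b \<gamma> X))
      in map (\<lambda>js. U (scat_feature H \<rho> js x)) (all_tuples J L))"

definition cst_perm :: "(real^'n::finite) list \<Rightarrow> real^'n^'n \<Rightarrow> (real^'n) list" where
  "cst_perm \<Phi> P = map (\<lambda>v. P *v v) \<Phi>"

end

theory Submission
  imports Defs
begin

lemma sym_inner:
  fixes A :: "real^'n::finite^'n"
  assumes "transpose A = A"
  shows "x \<bullet> (A *v y) = (A *v x) \<bullet> y"
  by (metis assms dot_lmul_matrix transpose_matrix_vector)

lemma quad_zero:
  fixes a c :: real
  assumes "\<And>t. 2 * t * a + t\<^sup>2 * c \<le> 0"
  shows "a = 0"
proof -
  define e where "e = 1 / (\<bar>c\<bar> + 1)"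
  have e: "e > 0" "e * \<bar>c\<bar> < 1" unfolding e_def by (auto simp: field_simps)
  have "2 * (e*a) * a + (e*a)\<^sup>2 * c \<le> 0" using assms .
  hence "a\<^sup>2 * e * (2 + e * c) \<le> 0" by (simp add: power2_eq_square algebra_simps)
  moreover have "2 + e * c > 0" using e by (smt (verit) abs_ge_self abs_minus_cancel mult_left_mono mult_minus_right)
  ultimately have "a\<^sup>2 \<le> 0" using e
    by (metis mult_le_0_iff not_less zero_less_mult_iff)
  thus ?thesis by simp
qed

lemma sym_eig_exists:
  fixes A :: "real^'n::finite^'n"
  assumes sym: "transpose A = A" and S: "subspace S" and nz: "S \<noteq> {0}"
    and inv: "\<And>x. x \<in> S \<Longrightarrow> A *v x \<in> S"
  shows "\<exists>v\<in>S. norm v = 1 \<and> A *v v = (v \<bullet> (A *v v)) *\<^sub>R v"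
proof -
  define f where "f x = x \<bullet> (A *v x)" for x
  define K where "K = S \<inter> sphere 0 1"
  have "compact K" unfolding K_def
    by (simp add: S closed_subspace closed_Int_compact)
  moreover obtain x where x: "x \<in> S" "x \<noteq> 0" using nz S subspace_0 by blast
  hence "(1 / norm x) *\<^sub>R x \<in> K" unfolding K_def using S by (simp add: subspace_scale)
  hence "K \<noteq> {}" by blast
  moreover have "continuous_on K f" unfolding f_def
    by (intro continuous_intros linear_continuous_on matrix_vector_mul_linear)
  ultimately obtain v where vK: "v \<in> K" and vmax: "\<And>y. y \<in> K \<Longrightarrow> f y \<le> f v"
    using continuous_attains_sup by metis
  have vS: "v \<in> S" and nv: "norm v = 1" using vK unfolding K_def by auto
  have vv: "v \<bullet> v = 1" using nv by (simp add: norm_eq_1)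
  define lam where "lam = f v"
  have key: "w \<bullet> (A *v v) = 0" if wS: "w \<in> S" and wv: "w \<bullet> v = 0" for w
  proof (rule quad_zero[where c = "f w - lam * (w \<bullet> w)"])
    fix t :: real
    define y where "y = v + t *\<^sub>R w"
    have yS: "y \<in> S" unfolding y_def using S vS wS by (simp add: subspace_add subspace_scale)
    have ny: "y \<bullet> y = 1 + t\<^sup>2 * (w \<bullet> w)" unfolding y_def using vv wv
      by (simp add: inner_add_left inner_add_right inner_commute power2_eq_square)
    hence ypos: "y \<bullet> y > 0" by (smt (verit) inner_ge_zero mult_nonneg_nonneg zero_le_power2)
    hence "norm y > 0" by (simp add: norm_eq_sqrt_inner)
    hence "(1 / norm y) *\<^sub>R y \<in> K" unfolding K_def using S yS by (simp add: subspace_scale)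
    hence "f ((1 / norm y) *\<^sub>R y) \<le> lam" unfolding lam_def by (rule vmax)
    moreover have "f ((1 / norm y) *\<^sub>R y) = f y / (y \<bullet> y)" unfolding f_def
      by (simp add: matrix_vector_mult_scaleR power2_norm_eq_inner[symmetric] power2_eq_square)
    ultimately have "f y \<le> lam * (y \<bullet> y)" using ypos by (simp add: divide_le_eq)
    moreover have "f y = lam + 2 * t * (w \<bullet> (A *v v)) + t\<^sup>2 * f w"
      unfolding y_def f_def lam_def
      using sym_inner[OF sym, of v w]
      by (simp add: matrix_vector_right_distrib matrix_vector_mult_scaleR inner_add_left inner_add_right
          inner_commute power2_eq_square algebra_simps)
    ultimately show "2 * t * (w \<bullet> (A *v v)) + t\<^sup>2 * (f w - lam * (w \<bullet> w)) \<le> 0"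
      using ny by (simp add: algebra_simps)
  qed
  define w where "w = A *v v - lam *\<^sub>R v"
  have wS: "w \<in> S" unfolding w_def using S vS inv by (simp add: subspace_diff subspace_scale)
  have wv: "w \<bullet> v = 0" unfolding w_def lam_def f_def using vv
    by (simp add: inner_diff_left inner_diff_right inner_commute)
  have "w \<bullet> w = w \<bullet> (A *v v) - lam * (w \<bullet> v)" unfolding w_def
    by (simp add: inner_diff_right)
  also have "\<dots> = 0" using key[OF wS wv] wv by simp
  finally have "w = 0" by simp
  hence "A *v v = lam *\<^sub>R v" unfolding w_def by simp
  thus ?thesis using vS nv unfolding lam_def f_def by blast
qed


lemma eig_basis_ind:
  fixes A :: "real^'n::finite^'n"
  assumes sym: "transpose A = A"
  shows "k \<le> CARD('n) \<Longrightarrow> \<exists>B. finite B \<and> card B = k \<and> (\<forall>b\<in>B. norm b = 1 \<and> (\<exists>c. A *v b = c *\<^sub>R b))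
      \<and> pairwise orthogonal B"
proof (induction k)
  case 0
  show ?case by (rule exI[of _ "{}"]) auto
next
  case (Suc k)
  then obtain B where B: "finite B" "card B = k" "\<forall>b\<in>B. norm b = 1 \<and> (\<exists>c. A *v b = c *\<^sub>R b)"
      "pairwise orthogonal B" by auto
  have "0 \<notin> B" using B(3) by force
  hence indep: "independent B" using B(4) pairwise_orthogonal_independent by blast
  hence "dim B = card B" using dim_span_eq_card_independent dim_span by metis
  hence "dim B < DIM(real^'n)" using Suc.prems B(2) by simp
  then obtain x :: "real^'n" where x: "x \<noteq> 0" "\<And>y. y \<in> span B \<Longrightarrow> orthogonal x y"
    using orthogonal_to_subspace_exists by blast
  define S where "S = {y :: real^'n. \<forall>b\<in>B. orthogonal b y}"
  have subS: "subspace S" unfolding S_def subspace_def orthogonal_def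
    by (auto simp: inner_add_right)
  have "x \<in> S" unfolding S_def using x(2) span_base orthogonal_commute by blast
  hence nz: "S \<noteq> {0}" using x(1) by blast
  have invS: "A *v y \<in> S" if "y \<in> S" for y
    unfolding S_def orthogonal_def mem_Collect_eq
  proof (intro ballI)
    fix b assume bB: "b \<in> B"
    then obtain c where c: "A *v b = c *\<^sub>R b" using B(3) by blast
    have "b \<bullet> (A *v y) = (A *v b) \<bullet> y" by (rule sym_inner[OF sym])
    also have "\<dots> = c * (b \<bullet> y)" using c by simp
    also have "\<dots> = 0" using that bB unfolding S_def orthogonal_def by simp
    finally show "b \<bullet> (A *v y) = 0" .
  qed
  obtain v where v: "v \<in> S" "norm v = 1" "A *v v = (v \<bullet> (A *v v)) *\<^sub>R v"
    using sym_eig_exists[OF sym subS nz invS] by blast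
  have vB: "v \<notin> B"
  proof
    assume "v \<in> B"
    hence "orthogonal v v" using v(1) unfolding S_def by blast
    thus False using v(2) by (simp add: orthogonal_def)
  qed
  show ?case
  proof (intro exI[of _ "insert v B"] conjI)
    show "finite (insert v B)" using B by simp
    show "card (insert v B) = Suc k" using B vB by simp
    show "\<forall>b\<in>insert v B. norm b = 1 \<and> (\<exists>c. A *v b = c *\<^sub>R b)" using B(3) v by blast
    show "pairwise orthogonal (insert v B)"
      using B(4) v(1) unfolding S_def pairwise_insert
      by (auto simp: orthogonal_commute)
  qed
qed

lemma spectral_exists:
  fixes A :: "real^'n::finite^'n"
  assumes sym: "transpose A = A"
  shows "\<exists>V lam. orthogonal_matrix V \<and> A = V ** diag_mat lam ** transpose V"
proof -
  obtain B where B: "finite B" "card B = CARD('n)" "\<forall>b\<in>B. norm b = 1 \<and> (\<exists>c. A *v b = c *\<^sub>R b)"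
      "pairwise orthogonal B" using eig_basis_ind[OF sym, of "CARD('n)"] by auto
  obtain g where g: "bij_betw g (UNIV :: 'n set) B"
    using finite_same_card_bij[of "UNIV :: 'n set" B] B by auto
  define V :: "real^'n^'n" where "V = (\<chi> i j. g j $ i)"
  have colV: "column j V = g j" for j unfolding V_def column_def by simp
  have gB: "g j \<in> B" for j using g bij_betwE by blast
  have ginj: "g i \<noteq> g j" if "i \<noteq> j" for i j using g that unfolding bij_betw_def inj_on_def by blast
  have oV: "orthogonal_matrix V" unfolding orthogonal_matrix_orthonormal_columns colV
    using B(3,4) gB ginj unfolding pairwise_def by blast
  define lam where "lam j = g j \<bullet> (A *v g j)" for j
  have eig: "A *v g j = lam j *\<^sub>R g j" for j
  proof -
    obtain c where c: "A *v g j = c *\<^sub>R g j" using B(3) gB by blast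
    have "g j \<bullet> g j = 1" using B(3) gB by (simp add: norm_eq_1)
    hence "lam j = c" unfolding lam_def c by simp
    thus ?thesis using c by simp
  qed
  have AV: "A ** V = V ** diag_mat lam"
  proof -
    have "(A ** V) $ i $ j = (V ** diag_mat lam) $ i $ j" for i j
    proof -
      have "(A ** V) $ i $ j = (A *v column j V) $ i"
        by (simp add: matrix_matrix_mult_def matrix_vector_mult_def column_def)
      also have "\<dots> = lam j * g j $ i" using eig colV by simp
      also have "\<dots> = (V ** diag_mat lam) $ i $ j"
        unfolding matrix_matrix_mult_def diag_mat_def V_def
        by (simp add: if_distrib[where f="\<lambda>z. _ * z"] sum.delta' cong: if_cong)
      finally show ?thesis .
    qed
    thus ?thesis by (simp add: vec_eq_iff)
  qed
  have "A = A ** (V ** transpose V)" using oV by (simp add: orthogonal_matrix_def)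
  also have "\<dots> = V ** diag_mat lam ** transpose V" by (simp add: matrix_mul_assoc AV)
  finally show ?thesis using oV by blast
qed


lemma diag_mul_left: "(diag_mat d ** M) $ i $ j = d i * M $ i $ j"
  unfolding matrix_matrix_mult_def diag_mat_def
  by (simp add: if_distrib[where f="\<lambda>z. z * _"] sum.delta cong: if_cong)

lemma diag_mul_right: "(M ** diag_mat d) $ i $ j = M $ i $ j * d j"
  unfolding matrix_matrix_mult_def diag_mat_def
  by (simp add: if_distrib[where f="\<lambda>z. _ * z"] sum.delta' cong: if_cong)

lemma spectral_unique:
  fixes V W :: "real^'n::finite^'n"
  assumes oV: "orthogonal_matrix V" and oW: "orthogonal_matrix W"
    and eq: "V ** diag_mat l ** transpose V = W ** diag_mat m ** transpose W"
  shows "V ** diag_mat (h \<circ> l) ** transpose V = W ** diag_mat (h \<circ> m) ** transpose W"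
proof -
  have VV: "transpose V ** V = mat 1" "V ** transpose V = mat 1"
    and WW: "transpose W ** W = mat 1" "W ** transpose W = mat 1"
    using oV oW by (auto simp: orthogonal_matrix_def)
  define R where "R = transpose V ** W"
  have "transpose V ** (V ** diag_mat l ** transpose V) ** W = transpose V ** (W ** diag_mat m ** transpose W) ** W"
    using eq by simp
  hence DR: "diag_mat l ** R = R ** diag_mat m"
    unfolding R_def by (simp add: matrix_mul_assoc VV WW)
      (simp add: matrix_mul_assoc[symmetric] WW)
  have "(diag_mat (h \<circ> l) ** R) $ i $ j = (R ** diag_mat (h \<circ> m)) $ i $ j" for i j
  proof -
    have "l i * R $ i $ j = R $ i $ j * m j"
      using arg_cong[OF DR, of "\<lambda>M. M $ i $ j"] by (simp add: diag_mul_left diag_mul_right)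
    hence "R $ i $ j = 0 \<or> l i = m j" by auto
    thus ?thesis by (auto simp: diag_mul_left diag_mul_right)
  qed
  hence DR2: "diag_mat (h \<circ> l) ** R = R ** diag_mat (h \<circ> m)" by (simp add: vec_eq_iff)
  have "V ** diag_mat (h \<circ> l) ** transpose V = V ** diag_mat (h \<circ> l) ** (R ** transpose W)"
    unfolding R_def by (simp add: matrix_mul_assoc[symmetric] WW)
  also have "\<dots> = V ** (diag_mat (h \<circ> l) ** R) ** transpose W" by (simp add: matrix_mul_assoc)
  also have "\<dots> = (V ** R) ** diag_mat (h \<circ> m) ** transpose W" unfolding DR2 by (simp add: matrix_mul_assoc)
  also have "V ** R = W" unfolding R_def by (simp add: matrix_mul_assoc VV)
  finally show ?thesis .
qed

lemma spectral_fun_eq: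
  fixes A :: "real^'n::finite^'n"
  assumes "orthogonal_matrix V" "A = V ** diag_mat lam ** transpose V"
  shows "spectral_fun h A = V ** diag_mat (h \<circ> lam) ** transpose V"
proof -
  let ?P = "\<lambda>M. \<exists>V lam. orthogonal_matrix V \<and> A = V ** diag_mat lam ** transpose V \<and> M = V ** diag_mat (h \<circ> lam) ** transpose V"
  have "?P (V ** diag_mat (h \<circ> lam) ** transpose V)" using assms by blast
  hence "?P (spectral_fun h A)" unfolding spectral_fun_def by (rule someI)
  then obtain V' lam' where "orthogonal_matrix V'" "A = V' ** diag_mat lam' ** transpose V'"
     "spectral_fun h A = V' ** diag_mat (h \<circ> lam') ** transpose V'" by blast
  thus ?thesis using spectral_unique[of V' V lam' lam h] assms by simp
qed

lemma spectral_fun_conj: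
  fixes A Q :: "real^'n::finite^'n"
  assumes sym: "transpose A = A" and oQ: "orthogonal_matrix Q"
  shows "spectral_fun h (Q ** A ** transpose Q) = Q ** spectral_fun h A ** transpose Q"
proof -
  obtain V lam where V: "orthogonal_matrix V" "A = V ** diag_mat lam ** transpose V"
    using spectral_exists[OF sym] by blast
  have "Q ** A ** transpose Q = (Q ** V) ** diag_mat lam ** transpose (Q ** V)"
    using V(2) by (simp add: matrix_transpose_mul matrix_mul_assoc)
  moreover have "orthogonal_matrix (Q ** V)" using oQ V(1) by (rule orthogonal_matrix_mul)
  ultimately have "spectral_fun h (Q ** A ** transpose Q) = (Q ** V) ** diag_mat (h \<circ> lam) ** transpose (Q ** V)"
    by (rule spectral_fun_eq[rotated])
  also have "\<dots> = Q ** (V ** diag_mat (h \<circ> lam) ** transpose V) ** transpose Q"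
    by (simp add: matrix_transpose_mul matrix_mul_assoc)
  also have "V ** diag_mat (h \<circ> lam) ** transpose V = spectral_fun h A"
    using spectral_fun_eq[OF V, of h] by simp
  finally show ?thesis .
qed

lemma sum_perm_delta:
  assumes p: "p permutes (UNIV :: 'n::finite set)"
  shows "(\<Sum>j\<in>UNIV. (if i = p j then 1 else 0) * f j) = (f (inv p i) :: real)"
    and "(\<Sum>j\<in>UNIV. f j * (if i = p j then 1 else 0)) = (f (inv p i) :: real)"
proof -
  have e: "(i = p j) = (j = inv p i)" for j by (metis permutes_inv_eq[OF p])
  show "(\<Sum>j\<in>UNIV. (if i = p j then 1 else 0) * f j) = (f (inv p i) :: real)"
    unfolding e by (simp add: if_distrib[where f="\<lambda>z. z * _"] cong: if_cong)
  show "(\<Sum>j\<in>UNIV. f j * (if i = p j then 1 else 0)) = (f (inv p i) :: real)"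
    unfolding e by (simp add: if_distrib[where f="\<lambda>z. _ * z"] cong: if_cong)
qed

lemma perm_mv:
  assumes p: "p permutes (UNIV :: 'n::finite set)"
  shows "(perm_matrix p *v x) $ i = x $ (inv p i)"
  unfolding perm_matrix_def matrix_vector_mult_def
  using sum_perm_delta(1)[OF p, where i=i and f="\<lambda>j. x $ j"] by simp

lemma perm_mm:
  assumes p: "p permutes (UNIV :: 'n::finite set)"
  shows "(perm_matrix p ** M) $ i $ j = M $ (inv p i) $ j"
  unfolding perm_matrix_def matrix_matrix_mult_def
  using sum_perm_delta(1)[OF p, where i=i and f="\<lambda>k. M $ k $ j"] by simp

lemma perm_mmT:
  assumes p: "p permutes (UNIV :: 'n::finite set)"
  shows "(M ** transpose (perm_matrix p)) $ i $ j = M $ i $ (inv p j)"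
  unfolding perm_matrix_def matrix_matrix_mult_def transpose_def
  using sum_perm_delta(2)[OF p, where i=j and f="\<lambda>k. M $ i $ k"] by simp

lemma perm_orth:
  assumes p: "p permutes (UNIV :: 'n::finite set)"
  shows "orthogonal_matrix (perm_matrix p :: real^'n^'n)"
proof -
  have "(perm_matrix p ** transpose (perm_matrix p)) $ i $ j = (mat 1 :: real^'n^'n) $ i $ j" for i j
  proof -
    have "(perm_matrix p ** transpose (perm_matrix p)) $ i $ j = (perm_matrix p :: real^'n^'n) $ i $ (inv p j)"
      by (rule perm_mmT[OF p])
    also have "\<dots> = (mat 1 :: real^'n^'n) $ i $ j"
      unfolding perm_matrix_def mat_def by (simp add: permutes_inverses(1)[OF p])
    finally show ?thesis .
  qed
  hence "perm_matrix p ** transpose (perm_matrix p) = (mat 1 :: real^'n^'n)" by (simp add: vec_eq_iff)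
  thus ?thesis by (simp add: orthogonal_matrix_def matrix_left_right_inverse)
qed

lemma perm_conj:
  assumes p: "p permutes (UNIV :: 'n::finite set)"
  shows "(perm_matrix p ** M ** transpose (perm_matrix p)) $ i $ j = M $ (inv p i) $ (inv p j)"
  by (simp add: perm_mmT[OF p] perm_mm[OF p])

lemma perm_entrywise:
  assumes p: "p permutes (UNIV :: 'n::finite set)"
  shows "perm_matrix p *v entrywise \<rho> v = entrywise \<rho> (perm_matrix p *v (v :: real^'n))"
  by (simp add: vec_eq_iff perm_mv[OF p] entrywise_def)

lemma sample_mean_perm:
  assumes p: "p permutes (UNIV :: 'n::finite set)"
  shows "sample_mean (perm_matrix p ** X) $ i = sample_mean (X :: real^'t::finite^'n) $ (inv p i)"
  unfolding sample_mean_def by (simp add: column_def perm_mm[OF p])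

lemma sample_cov_perm:
  assumes p: "p permutes (UNIV :: 'n::finite set)"
  shows "sample_cov (perm_matrix p ** X) = perm_matrix p ** sample_cov (X :: real^'t::finite^'n) ** transpose (perm_matrix p)"
  unfolding vec_eq_iff perm_conj[OF p]
  unfolding sample_cov_def by (simp add: column_def perm_mm[OF p] outer_def sample_mean_perm[OF p])

lemma sample_cov_sym: "transpose (sample_cov X) = sample_cov X"
  unfolding vec_eq_iff sample_cov_def by (simp add: transpose_def outer_def mult.commute)

lemma eigenvalues_conj:
  assumes oQ: "orthogonal_matrix (Q :: real^'n::finite^'n)"
  shows "eigenvalues (Q ** A ** transpose Q) = eigenvalues A"
proof -
  have QQ: "transpose Q ** Q = mat 1" "Q ** transpose Q = mat 1" using oQ by (auto simp: orthogonal_matrix_def)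
  have 1: "c \<in> eigenvalues A" if cin: "c \<in> eigenvalues (Q ** A ** transpose Q)" for c
  proof -
    obtain v where v: "v \<noteq> 0" "(Q ** A ** transpose Q) *v v = c *\<^sub>R v" using cin unfolding eigenvalues_def by auto
    have "transpose Q *v ((Q ** A ** transpose Q) *v v) = (transpose Q ** (Q ** A ** transpose Q)) *v v"
      by (rule matrix_vector_mul_assoc)
    also have "transpose Q ** (Q ** A ** transpose Q) = (transpose Q ** Q) ** A ** transpose Q"
      by (simp only: matrix_mul_assoc)
    also have "\<dots> = A ** transpose Q" by (simp only: QQ matrix_mul_lid)
    also have "(A ** transpose Q) *v v = A *v (transpose Q *v v)" by (rule matrix_vector_mul_assoc[symmetric])
    finally have "A *v (transpose Q *v v) = transpose Q *v ((Q ** A ** transpose Q) *v v)" ..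
    also have "\<dots> = c *\<^sub>R (transpose Q *v v)" using v(2) by (simp add: matrix_vector_mult_scaleR)
    finally have "A *v (transpose Q *v v) = c *\<^sub>R (transpose Q *v v)" .
    moreover have "transpose Q *v v \<noteq> 0"
    proof
      assume "transpose Q *v v = 0"
      hence "Q *v (transpose Q *v v) = 0" by simp
      thus False using v(1) by (metis matrix_vector_mul_assoc QQ matrix_vector_mul_lid)
    qed
    ultimately show ?thesis unfolding eigenvalues_def by blast
  qed
  have 2: "c \<in> eigenvalues (Q ** A ** transpose Q)" if cin: "c \<in> eigenvalues A" for c
  proof -
    obtain v where v: "v \<noteq> 0" "A *v v = c *\<^sub>R v" using cin unfolding eigenvalues_def by auto
    have "(Q ** A ** transpose Q) *v (Q *v v) = (Q ** A ** transpose Q ** Q) *v v"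
      by (rule matrix_vector_mul_assoc)
    also have "Q ** A ** transpose Q ** Q = Q ** A ** (transpose Q ** Q)"
      by (simp only: matrix_mul_assoc)
    also have "\<dots> = Q ** A" by (simp only: QQ matrix_mul_rid)
    also have "(Q ** A) *v v = Q *v (A *v v)" by (rule matrix_vector_mul_assoc[symmetric])
    finally have "(Q ** A ** transpose Q) *v (Q *v v) = Q *v (A *v v)" .
    also have "\<dots> = c *\<^sub>R (Q *v v)" using v(2) by (simp add: matrix_vector_mult_scaleR)
    finally have "(Q ** A ** transpose Q) *v (Q *v v) = c *\<^sub>R (Q *v v)" .
    moreover have "Q *v v \<noteq> 0"
    proof
      assume "Q *v v = 0"
      hence "transpose Q *v (Q *v v) = 0" by simp
      thus False using v(1) by (metis matrix_vector_mul_assoc QQ matrix_vector_mul_lid)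
    qed
    ultimately show ?thesis unfolding eigenvalues_def by blast
  qed
  show ?thesis using 1 2 by blast
qed

lemma cov_operator_perm:
  assumes p: "p permutes (UNIV :: 'n::finite set)"
  shows "cov_operator b \<gamma> (perm_matrix p ** X) = perm_matrix p ** cov_operator b \<gamma> (X :: real^'t::finite^'n) ** transpose (perm_matrix p)"
proof -
  have w: "largest_eigenvalue (sample_cov (perm_matrix p ** X)) = largest_eigenvalue (sample_cov X)"
    unfolding largest_eigenvalue_def sample_cov_perm[OF p] eigenvalues_conj[OF perm_orth[OF p]] ..
  show ?thesis
    unfolding vec_eq_iff perm_conj[OF p]
    unfolding cov_operator_def Let_def w
    by (simp add: sample_cov_perm[OF p] perm_conj[OF p] mat_def permutes_inverses(1)[OF p]
         permutes_inv_eq[OF p])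
qed

lemma sample_cov_sym_entry: "sample_cov X $ j $ i = sample_cov X $ i $ j"
  using arg_cong[OF sample_cov_sym[of X], of "\<lambda>M. M $ i $ j"] by (simp add: transpose_def)

lemma cov_operator_sym: "transpose (cov_operator b \<gamma> X) = cov_operator b \<gamma> X"
  unfolding cov_operator_def Let_def
  by (simp add: vec_eq_iff transpose_def mat_def sample_cov_sym_entry)

lemma scat_perm:
  fixes P :: "real^'n::finite^'n"
  assumes oP: "orthogonal_matrix P"
    and ent: "\<And>v. P *v entrywise \<rho> v = entrywise \<rho> (P *v v)"
    and H: "\<And>j. H' j = P ** H j ** transpose P"
  shows "scat_feature H' \<rho> js (P *v x) = P *v scat_feature H \<rho> js x"
proof (induction js)
  case Nil
  then show ?case by simp
next
  case (Cons j js)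
  have PP: "transpose P ** P = mat 1" using oP by (simp add: orthogonal_matrix_def)
  have "H' j *v (P *v y) = P *v (H j *v y)" for y
  proof -
    have "H' j *v (P *v y) = (P ** H j ** transpose P ** P) *v y"
      unfolding H by (rule matrix_vector_mul_assoc)
    also have "P ** H j ** transpose P ** P = P ** H j ** (transpose P ** P)"
      by (simp only: matrix_mul_assoc)
    also have "\<dots> = P ** H j" by (simp only: PP matrix_mul_rid)
    also have "(P ** H j) *v y = P *v (H j *v y)" by (rule matrix_vector_mul_assoc[symmetric])
    finally show ?thesis .
  qed
  thus ?case using Cons.IH ent by simp
qed

theorem theorem1:
  fixes X :: "real^'t::finite^'n::finite"
    and P :: "real^'n^'n"
    and b :: bool and \<gamma> :: real
    and h :: "nat \<Rightarrow> real \<Rightarrow> real" and J L :: nat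
    and \<rho> :: "real \<Rightarrow> real"
    and U1 :: "real^'n \<Rightarrow> real^'n"
    and U2 :: "real^'n \<Rightarrow> 'm"
    and x :: "real^'n"
  assumes "\<gamma> > 0"
    and "largest_eigenvalue (sample_cov X) > 0"
    and "is_permutation_matrix P"
  shows "((\<forall>Q y. is_permutation_matrix Q \<longrightarrow> U1 (Q *v y) = Q *v U1 y) \<longrightarrow>
           CST b \<gamma> (P ** X) h J L \<rho> U1 (P *v x) = cst_perm (CST b \<gamma> X h J L \<rho> U1 x) P)
       \<and> ((\<forall>Q y. is_permutation_matrix Q \<longrightarrow> U2 (Q *v y) = U2 y) \<longrightarrow>
           CST b \<gamma> (P ** X) h J L \<rho> U2 (P *v x) = CST b \<gamma> X h J L \<rho> U2 x)"
proof -
  obtain p where p: "p permutes (UNIV :: 'n set)" and Pp: "P = perm_matrix p"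
    using assms(3) unfolding is_permutation_matrix_def by blast
  have oP: "orthogonal_matrix P" using perm_orth[OF p] Pp by simp
  have ent: "\<And>v. P *v entrywise \<rho> v = entrywise \<rho> (P *v v)" using perm_entrywise[OF p] Pp by simp
  have H: "spectral_fun (h j) (cov_operator b \<gamma> (P ** X)) = P ** spectral_fun (h j) (cov_operator b \<gamma> X) ** transpose P" for j
    unfolding Pp cov_operator_perm[OF p]
    by (rule spectral_fun_conj[OF cov_operator_sym perm_orth[OF p]])
  have scat: "scat_feature (\<lambda>j. spectral_fun (h j) (cov_operator b \<gamma> (P ** X))) \<rho> js (P *v x)
      = P *v scat_feature (\<lambda>j. spectral_fun (h j) (cov_operator b \<gamma> X)) \<rho> js x" for js
    by (rule scat_perm[OF oP ent H])
  show ?thesis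
    unfolding CST_def Let_def cst_perm_def scat
    using assms(3) by auto
qed

end
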